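(* (Sharpness of Theorem 2.1 at real points.) Let $-1\le B<A\le 1$, let $\Phi$, $S$ be as below, and let $z_0\in(-1,1)$ be real. (a) If $(A,B)\in E_1\cup E_2$, or if $(A,B)\in E_3$ and $z_0\in S$, then there exists $f\in\mathcal{C}(A,B)$ with $|S_f(z_0)|=\Phi(z_0)$. Explicitly, one may take $f$ defined by $1+\frac{zf''(z)}{f'(z)}=\frac{1+A\phi(z)}{1+B\phi(z)}$ with $\phi(z)=\frac{pz(z-b)}{1-bz}$, where $(p,q)=(1,1)$ if $A+B\le 0$, $(p,q)=(-1,1)$ if $A+B>0,B\ge 0$, $(p,q)=(-1,-1)$ if $A+B>0,B<0$, and $b=\dfrac{z_0(2-2q|B|-|A+B|(1-z_0^2))}{2-2q|B|z_0^2-|A+B|(1-z_0^2)}\in(-1,1)$. (b) If $(A,B)\in E_3$, $z_0\notin S$, and either $B>0,\ z_0\le 0$ or $B<0,\ z_0\ge 0$, then the function $K_{A,B}$ satisfies $|S_{K_{A,B}}(z_0)|=\dfrac{|A^2-B^2|}{2(1-|B||z_0|)^2}$.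
   Context: $\mathbb{D}$ is the unit disk; $\mathcal{C}(A,B)$ for $-1\le B<A\le1$ is the set of analytic $f$ on $\mathbb{D}$ with $f(0)=0,f'(0)=1$, $f'\ne0$, and $1+zf''/f'\prec(1+Az)/(1+Bz)$ (subordination: equals $(1+A\omega)/(1+B\omega)$ for some analytic $\omega:\mathbb{D}\to\mathbb{D}$, $\omega(0)=0$). $S_f=(f''/f')'-\frac12(f''/f')^2$. $E=\{(A,B):-1\le B<A\le1\}$; $E_1=\{(A,B)\in E:1-\sqrt{1-B^2}<|A+B|<1+\sqrt{1-B^2}\}$, $E_2=\{(A,B)\in E:|A+B|\le 1-\sqrt{1-B^2},\ |A+B|\le|B|\}$, $E_3=\{(A,B)\in E:|A+B|\ge 1+\sqrt{1-B^2},\ |A+B|>|B|\}$. $\Phi(z)=\frac{(A-B)(2-|A+B|(1-|z|^2))}{(1-|z|^2)(2-|A+B|(1-|z|^2)-2B^2|z|^2)}$. For $(A,B)\in E_3$, $\delta_{1,2}=\frac{|B|\mp\sqrt{B^2-|A+B|(2-|A+B|)}}{|A+B|}$ and $S=\{z:|z|<\delta_1\text{ or }|z|>\delta_2\}$. $K_{A,B}(z)=\frac1A\{(1+Bz)^{A/B}-1\}$ if $A\ne0,B\ne0$; $\frac1B\log(1+Bz)$ if $A=0$; $\frac1A(e^{Az}-1)$ if $B=0$; it lies in $\mathcal{C}(A,B)$ and $S_{K_{A,B}}(z)=-\frac{A^2-B^2}{2(1+Bz)^2}$. *)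

theory Defs
  imports "HOL-Analysis.Analysis"
begin

definition schwarzian :: "(complex \<Rightarrow> complex) \<Rightarrow> complex \<Rightarrow> complex" where
  "schwarzian f z =
     deriv (\<lambda>w. deriv (deriv f) w / deriv f w) z
     - (1/2) * (deriv (deriv f) z / deriv f z)^2"

definition classC :: "real \<Rightarrow> real \<Rightarrow> (complex \<Rightarrow> complex) set" where
  "classC A B = {f. f holomorphic_on ball 0 1 \<and> f 0 = 0 \<and> deriv f 0 = 1 \<and>
      (\<forall>z\<in>ball 0 1. deriv f z \<noteq> 0) \<and>
      (\<exists>\<omega>. \<omega> holomorphic_on ball 0 1 \<and> \<omega> 0 = 0 \<and> (\<forall>z\<in>ball 0 1. \<omega> z \<in> ball 0 1) \<and>
         (\<forall>z\<in>ball 0 1. 1 + z * deriv (deriv f) z / deriv f z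
                 = (1 + of_real A * \<omega> z) / (1 + of_real B * \<omega> z)))}"

definition Eset :: "(real \<times> real) set" where
  "Eset = {(A, B). -1 \<le> B \<and> B < A \<and> A \<le> 1}"

definition E1 :: "(real \<times> real) set" where
  "E1 = {(A, B). (A, B) \<in> Eset \<and> 1 - sqrt (1 - B^2) < \<bar>A + B\<bar> \<and> \<bar>A + B\<bar> < 1 + sqrt (1 - B^2)}"

definition E2 :: "(real \<times> real) set" where
  "E2 = {(A, B). (A, B) \<in> Eset \<and> \<bar>A + B\<bar> \<le> 1 - sqrt (1 - B^2) \<and> \<bar>A + B\<bar> \<le> \<bar>B\<bar>}"

definition E3 :: "(real \<times> real) set" where
  "E3 = {(A, B). (A, B) \<in> Eset \<and> \<bar>A + B\<bar> \<ge> 1 + sqrt (1 - B^2) \<and> \<bar>A + B\<bar> > \<bar>B\<bar>}"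

definition Phi :: "real \<Rightarrow> real \<Rightarrow> complex \<Rightarrow> real" where
  "Phi A B z = (A - B) * (2 - \<bar>A + B\<bar> * (1 - (cmod z)^2)) /
      ((1 - (cmod z)^2) * (2 - \<bar>A + B\<bar> * (1 - (cmod z)^2) - 2 * B^2 * (cmod z)^2))"

definition delta1 :: "real \<Rightarrow> real \<Rightarrow> real" where
  "delta1 A B = (\<bar>B\<bar> - sqrt (B^2 - \<bar>A + B\<bar> * (2 - \<bar>A + B\<bar>))) / \<bar>A + B\<bar>"

definition delta2 :: "real \<Rightarrow> real \<Rightarrow> real" where
  "delta2 A B = (\<bar>B\<bar> + sqrt (B^2 - \<bar>A + B\<bar> * (2 - \<bar>A + B\<bar>))) / \<bar>A + B\<bar>"

definition Sset :: "real \<Rightarrow> real \<Rightarrow> complex set" where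
  "Sset A B = {z. cmod z < delta1 A B \<or> cmod z > delta2 A B}"

definition KAB :: "real \<Rightarrow> real \<Rightarrow> complex \<Rightarrow> complex" where
  "KAB A B z =
     (if A \<noteq> 0 \<and> B \<noteq> 0 then (1 / of_real A) * ((1 + of_real B * z) powr (of_real (A / B)) - 1)
      else if A = 0 then (1 / of_real B) * Ln (1 + of_real B * z)
      else (1 / of_real A) * (exp (of_real A * z) - 1))"

definition par_p :: "real \<Rightarrow> real \<Rightarrow> real" where
  "par_p A B = (if A + B \<le> 0 then 1 else -1)"

definition par_q :: "real \<Rightarrow> real \<Rightarrow> real" where
  "par_q A B = (if A + B \<le> 0 then 1 else if B \<ge> 0 then 1 else -1)"

definition par_b :: "real \<Rightarrow> real \<Rightarrow> real \<Rightarrow> real" where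
  "par_b A B z0 =
     z0 * (2 - 2 * par_q A B * \<bar>B\<bar> - \<bar>A + B\<bar> * (1 - z0^2)) /
       (2 - 2 * par_q A B * \<bar>B\<bar> * z0^2 - \<bar>A + B\<bar> * (1 - z0^2))"

definition ext_phi :: "real \<Rightarrow> real \<Rightarrow> real \<Rightarrow> complex \<Rightarrow> complex" where
  "ext_phi A B z0 z =
     of_real (par_p A B) * z * (z - of_real (par_b A B z0)) / (1 - of_real (par_b A B z0) * z)"

end

theory Submission
  imports Defs "HOL-Complex_Analysis.Complex_Analysis"
begin
lemma core:
  fixes A B z0 p b :: real
  assumes p: "p = 1 \<or> p = -1"
  and M0: "2 - 2*(-p*B)*z0^2 - (-p*(A+B))*(1-z0^2) \<noteq> 0"
  and m0: "1 - z0^2 \<noteq> 0"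
  and Q0: "2 - (-p*(A+B))*(1-z0^2) - 2*B^2*z0^2 \<noteq> 0"
  and b: "b = z0*(2 - 2*(-p*B) - (-p*(A+B))*(1-z0^2)) / (2 - 2*(-p*B)*z0^2 - (-p*(A+B))*(1-z0^2))"
  shows "(2*((A-B)*p)*((1 - b*z0 + B*p*z0*(z0-b)) - (z0-b)*(-b*(1+B*p) + 2*B*p*z0)) - ((A-B)*p)^2*(z0-b)^2)
           / (2*(1 - b*z0 + B*p*z0*(z0-b))^2)
       = p * ((A-B)*(2 - (-p*(A+B))*(1-z0^2)) / ((1-z0^2)*(2 - (-p*(A+B))*(1-z0^2) - 2*B^2*z0^2)))"
proof -
  define m where "m = z0^2"
  define s where "s = -p*(A+B)"
  define t where "t = -p*B"
  define M where "M = 2 - 2*t*m - s*(1-m)"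
  define N where "N = 2 - 2*t - s*(1-m)"
  define Q where "Q = 2 - s*(1-m) - 2*B^2*m"
  define R where "R = 2 - s*(1-m)"
  define c where "c = (A-B)*p"
  define dn where "dn = -z0*N*(1+B*p) + 2*B*p*z0*M"
  have M0': "M \<noteq> 0" using M0 by (simp add: M_def t_def s_def m_def)
  have Q0': "Q \<noteq> 0" using Q0 by (simp add: Q_def s_def m_def)
  have m0': "1 - m \<noteq> 0" using m0 by (simp add: m_def)
  have bb: "b = z0*N/M" unfolding b N_def M_def t_def s_def m_def by simp
  have p2: "p^2 = 1" using p by auto
  have hX: "z0 - b = 2*t*z0*(1-m)/M"
    using M0' unfolding bb by (simp add: field_simps M_def N_def m_def power2_eq_square, (simp add: algebra_simps)?)
  have e1: "1 - b*z0 = (1-m)*R/M"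
    using M0' unfolding bb by (simp add: field_simps M_def N_def R_def m_def power2_eq_square, (simp add: algebra_simps)?)
  have e2: "B*p*z0*(2*t*z0*(1-m)/M) = -2*B^2*m*(1-m)/M"
    using p by (auto simp: t_def m_def power2_eq_square)
  have hD: "1 - b*z0 + B*p*z0*(z0-b) = (1-m)*Q/M"
    unfolding e1 hX e2 using M0' by (simp add: field_simps Q_def R_def, (simp add: algebra_simps)?)
  have hDp: "-b*(1+B*p) + 2*B*p*z0 = dn/M"
    using M0' unfolding bb dn_def by (simp add: field_simps)
  have poly: "Q*M - 2*t*z0*dn - 2*c*t^2*m*(1-m) = R*Q"
    using p unfolding Q_def M_def dn_def c_def R_def N_def t_def s_def m_def
    by (auto simp: algebra_simps power2_eq_square)
  have key: "(2 * c * ((1 - m) * Q / M - 2 * t * z0 * (1 - m) / M * (dn / M)) - c\<^sup>2 * (2 * t * z0 * (1 - m) / M)\<^sup>2) /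
    (2 * ((1 - m) * Q / M)\<^sup>2) = p * ((A - B) * R / ((1 - m) * Q))"
  proof -
    have num: "2 * c * ((1 - m) * Q / M - 2 * t * z0 * (1 - m) / M * (dn / M)) - c\<^sup>2 * (2 * t * z0 * (1 - m) / M)\<^sup>2
       = (1-m)/M^2 * (2*c*(Q*M - 2*t*z0*dn - 2*c*t^2*m*(1-m)))"
      using M0' by (simp add: field_simps power2_eq_square m_def, (simp add: algebra_simps)?)
    also have "\<dots> = (1-m)/M^2 * (2*c*(R*Q))" by (simp only: poly)
    finally have num': "2 * c * ((1 - m) * Q / M - 2 * t * z0 * (1 - m) / M * (dn / M)) - c\<^sup>2 * (2 * t * z0 * (1 - m) / M)\<^sup>2
       = (1-m)/M^2 * (2*c*(R*Q))" .
    have den: "2 * ((1 - m) * Q / M)\<^sup>2 = (1-m)/M^2 * (2*(1-m)*Q^2)"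
      using M0' by (simp add: field_simps power2_eq_square)
      have k: "(1-m)/M^2 \<noteq> 0" using M0' m0' by simp
      have "2*c*(R*Q) / (2*(1-m)*Q^2) = p * ((A - B) * R / ((1 - m) * Q))"
        using Q0' m0' by (simp add: c_def field_simps power2_eq_square)
      then show ?thesis unfolding num' den mult_divide_mult_cancel_left[OF k] .
  qed
  have "(2*c*((1 - b*z0 + B*p*z0*(z0-b)) - (z0-b)*(-b*(1+B*p) + 2*B*p*z0)) - c^2*(z0-b)^2)
           / (2*(1 - b*z0 + B*p*z0*(z0-b))^2) = p*((A-B)*R/((1-m)*Q))"
    unfolding hD hDp unfolding hX by (rule key)
  then show ?thesis by (simp add: c_def R_def s_def m_def Q_def)
qed
lemma blaschke:
  fixes b :: real and z :: complex
  assumes "\<bar>b\<bar> < 1" "cmod z < 1"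
  shows "cmod (z - of_real b) < cmod (1 - of_real b * z)"
proof -
  have e: "(cmod (1 - of_real b * z))^2 - (cmod (z - of_real b))^2 = (1 - b^2) * (1 - (cmod z)^2)"
    by (simp only: cmod_power2) (simp add: algebra_simps power2_eq_square)
  have "b^2 < 1" using assms(1) by (simp add: abs_square_less_1)
  moreover have "(cmod z)^2 < 1" using assms(2) by (simp add: power_less_one_iff abs_square_less_1)
  ultimately have "(cmod (z - of_real b))^2 < (cmod (1 - of_real b * z))^2" using e
    by (smt (verit) mult_pos_pos)
  then show ?thesis by (simp add: power2_less_imp_less)
qed
lemma exists_f:
  fixes A B p b :: real
  assumes b: "\<bar>b\<bar> < 1" and B: "\<bar>B\<bar> \<le> 1" and p: "p = 1 \<or> p = -1"
  shows "\<exists>f\<in>classC A B.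
     (\<forall>z\<in>ball 0 1. 1 + z * deriv (deriv f) z / deriv f z
        = (1 + of_real A * (of_real p * z * (z - of_real b) / (1 - of_real b * z)))
          / (1 + of_real B * (of_real p * z * (z - of_real b) / (1 - of_real b * z))))
   \<and> (\<forall>z\<in>ball 0 1. schwarzian f z =
        deriv (\<lambda>z. of_real ((A-B)*p) * (z - of_real b) / (1 - of_real b * z + of_real (B*p) * z * (z - of_real b))) z
        - ((\<lambda>z. of_real ((A-B)*p) * (z - of_real b) / (1 - of_real b * z + of_real (B*p) * z * (z - of_real b))) z)^2/2)"
proof -
  define \<phi> where "\<phi> = (\<lambda>z::complex. of_real p * z * (z - of_real b) / (1 - of_real b * z))"
  define g where "g = (\<lambda>z::complex. of_real ((A-B)*p) * (z - of_real b) / (1 - of_real b * z + of_real (B*p) * z * (z - of_real b)))"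
  have u0: "1 - of_real b * z \<noteq> 0" if "z \<in> ball 0 1" for z :: complex
  proof
    have "cmod z < 1" using that by simp
    have "\<bar>b\<bar> * cmod z \<le> \<bar>b\<bar>" using \<open>cmod z < 1\<close> by (simp add: mult_left_le)
    then have lt: "cmod (of_real b * z) < 1" using b by (simp add: norm_mult)
    assume "1 - of_real b * z = 0"
    then have "of_real b * z = 1" by simp
    with lt show False by simp
  qed
  have phi1: "cmod (\<phi> z) < 1" if "z \<in> ball 0 1" for z
  proof -
    have z1: "cmod z < 1" using that by simp
    have "cmod (\<phi> z) = cmod z * (cmod (z - of_real b) / cmod (1 - of_real b * z))"
      using p by (auto simp: \<phi>_def norm_mult norm_divide)
    also have "\<dots> < 1"
    proof -
      have "cmod (z - of_real b) / cmod (1 - of_real b * z) < 1"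
        using blaschke[OF b z1] u0[OF that] by simp
      moreover have "cmod (z - of_real b) / cmod (1 - of_real b * z) \<ge> 0" by simp
      ultimately have "cmod z * (cmod (z - of_real b) / cmod (1 - of_real b * z)) \<le> cmod z"
        by (intro mult_left_le) auto
      then show ?thesis using z1 by linarith
    qed
    finally show ?thesis .
  qed
  have w0: "1 + of_real B * \<phi> z \<noteq> 0" if "z \<in> ball 0 1" for z
  proof
    have "\<bar>B\<bar> * cmod (\<phi> z) \<le> cmod (\<phi> z)" using B by (intro mult_left_le_one_le) auto
    then have lt: "cmod (of_real B * \<phi> z) < 1" using phi1[OF that] by (simp add: norm_mult)
    assume "1 + of_real B * \<phi> z = 0"
    then have "of_real B * \<phi> z = -1" by (simp add: add_eq_0_iff)
    with lt show False by simp
  qed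
  have Dfac: "1 - of_real b * z + of_real (B*p) * z * (z - of_real b) = (1 - of_real b * z) * (1 + of_real B * \<phi> z)"
    if "z \<in> ball 0 1" for z :: complex
    using u0[OF that] by (simp add: \<phi>_def field_simps)
  have D0: "1 - of_real b * z + of_real (B*p) * z * (z - of_real b) \<noteq> 0" if "z \<in> ball 0 1" for z :: complex
    using Dfac[OF that] u0[OF that] w0[OF that] by simp
  have gh: "g holomorphic_on ball 0 1"
    unfolding g_def using D0 by (auto intro!: holomorphic_intros)
  obtain H0 where H0: "\<And>x. x \<in> ball 0 1 \<Longrightarrow> (H0 has_field_derivative g x) (at x within ball 0 1)"
    using holomorphic_convex_primitive'[OF convex_ball open_ball gh] by blast
  define H where "H = (\<lambda>z. H0 z - H0 0)"
  have H: "(H has_field_derivative g x) (at x)" if "x \<in> ball 0 1" for x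
    unfolding H_def using H0[OF that] that
    by (auto intro!: derivative_eq_intros simp: at_within_open[OF that open_ball])
  have H00: "H 0 = 0" by (simp add: H_def)
  have eH: "((\<lambda>z. exp (H z)) has_field_derivative exp (H x) * g x) (at x)" if "x \<in> ball 0 1" for x
    using H[OF that] by (auto intro!: derivative_eq_intros)
  have eHh: "(\<lambda>z. exp (H z)) holomorphic_on ball 0 1"
    unfolding holomorphic_on_open[OF open_ball] using eH by blast
  obtain F0 where F0: "\<And>x. x \<in> ball 0 1 \<Longrightarrow> (F0 has_field_derivative exp (H x)) (at x within ball 0 1)"
    using holomorphic_convex_primitive'[OF convex_ball open_ball eHh] by blast
  define f where "f = (\<lambda>z. F0 z - F0 0)"
  have F: "(f has_field_derivative exp (H x)) (at x)" if "x \<in> ball 0 1" for x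
    unfolding f_def using F0[OF that] that
    by (auto intro!: derivative_eq_intros simp: at_within_open[OF that open_ball])
  have d1: "deriv f x = exp (H x)" if "x \<in> ball 0 1" for x
    using F[OF that] by (rule DERIV_imp_deriv)
  have d2: "deriv (deriv f) x = exp (H x) * g x" if "x \<in> ball 0 1" for x
  proof -
    have ev: "eventually (\<lambda>w. deriv f w = exp (H w)) (nhds x)"
      using eventually_nhds_in_open[OF open_ball that] by (rule eventually_mono) (simp add: d1)
    have "deriv (deriv f) x = deriv (\<lambda>z. exp (H z)) x"
      by (rule deriv_cong_ev[OF ev refl])
    also have "\<dots> = exp (H x) * g x" using eH[OF that] by (rule DERIV_imp_deriv)
    finally show ?thesis .
  qed
  have ratio: "deriv (deriv f) x / deriv f x = g x" if "x \<in> ball 0 1" for x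
    using d1[OF that] d2[OF that] by simp
  have fh: "f holomorphic_on ball 0 1"
    unfolding holomorphic_on_open[OF open_ball] using F by blast
  have phih: "\<phi> holomorphic_on ball 0 1"
    unfolding \<phi>_def using u0 by (auto intro!: holomorphic_intros)
  have ident: "1 + z * deriv (deriv f) z / deriv f z = (1 + of_real A * \<phi> z) / (1 + of_real B * \<phi> z)"
    if "z \<in> ball 0 1" for z
  proof -
    have "1 + z * deriv (deriv f) z / deriv f z = 1 + z * g z"
      using ratio[OF that] by (simp add: mult.assoc times_divide_eq_right[symmetric])
    also have "\<dots> = (1 + of_real A * \<phi> z) / (1 + of_real B * \<phi> z)"
    proof -
      define u where "u = 1 - of_real b * z"
      define v where "v = of_real p * z * (z - of_real b)"
      have u0': "u \<noteq> 0" using u0[OF that] by (simp add: u_def)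
      have phv: "\<phi> z = v / u" by (simp add: \<phi>_def u_def v_def)
      have uBv: "(1 - of_real b * z) * (1 + of_real B * \<phi> z) = u + of_real B * v"
        using u0' unfolding phv u_def[symmetric] by (simp add: field_simps)
      have nz: "u + of_real B * v \<noteq> 0"
        using u0[OF that] w0[OF that] uBv[symmetric] by simp
      have "1 + z * g z = 1 + of_real (A-B) * v / (u + of_real B * v)"
        unfolding g_def Dfac[OF that] uBv by (simp add: v_def mult.assoc mult.left_commute)
      also have "\<dots> = (u + of_real A * v) / (u + of_real B * v)"
        using nz by (simp add: field_simps)
      also have "\<dots> = (1 + of_real A * \<phi> z) / (1 + of_real B * \<phi> z)"
      proof -
        have e1: "1 + of_real A * (v / u) = (u + of_real A * v) / u" using u0' by (simp add: field_simps)
        have e2: "1 + of_real B * (v / u) = (u + of_real B * v) / u" using u0' by (simp add: field_simps)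
        show ?thesis unfolding phv e1 e2 using u0' nz by simp
      qed
      finally show ?thesis .
    qed
    finally show ?thesis .
  qed
  have "f \<in> classC A B"
    unfolding classC_def
  proof (intro CollectI conjI)
    show "f holomorphic_on ball 0 1" by (fact fh)
    show "f 0 = 0" by (simp add: f_def)
    show "deriv f 0 = 1" using d1[of 0] H00 by simp
    show "\<forall>z\<in>ball 0 1. deriv f z \<noteq> 0" using d1 by simp
    show "\<exists>\<omega>. \<omega> holomorphic_on ball 0 1 \<and> \<omega> 0 = 0 \<and> (\<forall>z\<in>ball 0 1. \<omega> z \<in> ball 0 1) \<and>
         (\<forall>z\<in>ball 0 1. 1 + z * deriv (deriv f) z / deriv f z
                 = (1 + of_real A * \<omega> z) / (1 + of_real B * \<omega> z))"
      using phih phi1 ident by (intro exI[of _ \<phi>]) (auto simp: \<phi>_def)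
  qed
  moreover have "schwarzian f z = deriv g z - (g z)^2/2" if "z \<in> ball 0 1" for z
  proof -
    have ev: "eventually (\<lambda>w. deriv (deriv f) w / deriv f w = g w) (nhds z)"
      using eventually_nhds_in_open[OF open_ball that] by (rule eventually_mono) (simp add: ratio)
    have "deriv (\<lambda>w. deriv (deriv f) w / deriv f w) z = deriv g z"
      by (rule deriv_cong_ev[OF ev refl])
    then show ?thesis unfolding schwarzian_def using ratio[OF that] by simp
  qed
  ultimately show ?thesis using ident unfolding \<phi>_def g_def by blast
qed
lemma g_real:
  fixes b c B' z0 :: real
  assumes D0: "1 - b*z0 + B'*z0*(z0-b) \<noteq> 0"
  shows "deriv (\<lambda>z::complex. of_real c * (z - of_real b) / (1 - of_real b * z + of_real B' * z * (z - of_real b))) (of_real z0)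
     - ((\<lambda>z::complex. of_real c * (z - of_real b) / (1 - of_real b * z + of_real B' * z * (z - of_real b))) (of_real z0))^2/2
     = of_real ((2*c*((1 - b*z0 + B'*z0*(z0-b)) - (z0-b)*(-b*(1+B') + 2*B'*z0)) - c^2*(z0-b)^2)
           / (2*(1 - b*z0 + B'*z0*(z0-b))^2))"
proof -
  define g where "g = (\<lambda>z::complex. of_real c * (z - of_real b) / (1 - of_real b * z + of_real B' * z * (z - of_real b)))"
  define Z where "Z = (of_real z0 :: complex)"
  define Dz where "Dz = 1 - of_real b * Z + of_real B' * Z * (Z - of_real b)"
  have Dz: "Dz = of_real (1 - b*z0 + B'*z0*(z0-b))" by (simp add: Dz_def Z_def)
  have Dnz: "Dz \<noteq> 0" using D0 unfolding Dz by (simp only: of_real_eq_0_iff not_False_eq_True)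
  have "(g has_field_derivative
      (of_real c * Dz - of_real c * (Z - of_real b) * (- of_real b + of_real B' * (Z - of_real b) + of_real B' * Z)) / Dz^2) (at Z)"
    unfolding g_def using Dnz unfolding Dz_def
    by (auto intro!: derivative_eq_intros simp: power2_eq_square algebra_simps)
  then have "deriv g Z = (of_real c * Dz - of_real c * (Z - of_real b) * (- of_real b + of_real B' * (Z - of_real b) + of_real B' * Z)) / Dz^2"
    by (rule DERIV_imp_deriv)
  moreover have "g Z = of_real c * (Z - of_real b) / Dz" by (simp add: g_def Dz_def)
  moreover note calc = calculation
  ultimately have "deriv g Z - (g Z)^2/2 = (2 * of_real c * (Dz - (Z - of_real b) * (- of_real b + of_real B' * (Z - of_real b) + of_real B' * Z)) - (of_real c)^2 * (Z - of_real b)^2) / (2*Dz^2)"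
  proof -
    have alg: "\<And>X Y W D::complex. D \<noteq> 0 \<Longrightarrow> (X*D - X*Y*W)/D^2 - (X*Y/D)^2/2 = (2*X*(D - Y*W) - X^2*Y^2)/(2*D^2)"
      by (simp add: field_simps power2_eq_square)
    show ?thesis using alg[OF Dnz] \<open>deriv g Z = _\<close> \<open>g Z = _\<close> by simp
  qed
  also have "\<dots> = of_real ((2*c*((1 - b*z0 + B'*z0*(z0-b)) - (z0-b)*(-b*(1+B') + 2*B'*z0)) - c^2*(z0-b)^2)
           / (2*(1 - b*z0 + B'*z0*(z0-b))^2))"
    unfolding Dz by (simp add: Z_def algebra_simps)
  finally show ?thesis unfolding g_def Z_def .
qed
lemma partb:
  fixes A B z0 :: real
  assumes A0: "A \<noteq> 0" and B0: "B \<noteq> 0" and B1: "\<bar>B\<bar> \<le> 1" and z1: "\<bar>z0\<bar> < 1"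
  shows "schwarzian (KAB A B) (of_real z0) = - of_real ((A^2 - B^2)/(2*(1+B*z0)^2))"
proof -
  define a where "a = (of_real (A/B) :: complex)"
  define W where "W = (\<lambda>z::complex. 1 + of_real B * z)"
  have KK: "KAB A B = (\<lambda>z. (1/of_real A) * (W z powr a - 1))"
    by (rule ext) (simp add: KAB_def A0 B0 W_def a_def)
  have Wpos: "Re (W z) > 0" if "z \<in> ball 0 1" for z
  proof -
    have "\<bar>Re z\<bar> < 1" using that abs_Re_le_cmod[of z] by simp
    then have "\<bar>B * Re z\<bar> < 1" using B1
      by (simp add: abs_mult) (metis abs_ge_zero less_le_trans mult_left_le_one_le not_le)
    then show ?thesis by (simp add: W_def)
  qed
  have Wnp: "W z \<notin> \<real>\<^sub>\<le>\<^sub>0" if "z \<in> ball 0 1" for z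
    using Wpos[OF that] by (simp add: complex_nonpos_Reals_iff)
  have Wnz: "W z \<noteq> 0" if "z \<in> ball 0 1" for z
    using Wpos[OF that] by auto
  have aB: "a * of_real B / of_real A = 1" using A0 B0 by (simp add: a_def)
  have d1: "(KAB A B has_field_derivative W z powr (a - 1)) (at z)" if "z \<in> ball 0 1" for z
  proof -
    have "((\<lambda>z. (1/of_real A) * (W z powr a - 1)) has_field_derivative (1/of_real A) * (a * W z powr (a - 1) * of_real B)) (at z)"
      unfolding W_def using Wnp[OF that] A0 unfolding W_def
      by (auto intro!: derivative_eq_intros)
    moreover have "(1/of_real A) * (a * W z powr (a - 1) * of_real B) = W z powr (a - 1)"
      using aB by (simp add: field_simps)
    ultimately show ?thesis unfolding KK by simp
  qed
  have dK: "deriv (KAB A B) z = W z powr (a - 1)" if "z \<in> ball 0 1" for z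
    using d1[OF that] by (rule DERIV_imp_deriv)
  have d2: "((\<lambda>z. W z powr (a - 1)) has_field_derivative (a - 1) * W z powr (a - 1 - 1) * of_real B) (at z)"
    if "z \<in> ball 0 1" for z
    unfolding W_def using Wnp[OF that] unfolding W_def
    by (auto intro!: derivative_eq_intros)
  have ddK: "deriv (deriv (KAB A B)) z = (a - 1) * W z powr (a - 1 - 1) * of_real B" if "z \<in> ball 0 1" for z
  proof -
    have ev: "eventually (\<lambda>w. deriv (KAB A B) w = W w powr (a - 1)) (nhds z)"
      using eventually_nhds_in_open[OF open_ball that] by (rule eventually_mono) (simp add: dK)
    have "deriv (deriv (KAB A B)) z = deriv (\<lambda>w. W w powr (a - 1)) z"
      by (rule deriv_cong_ev[OF ev refl])
    also have "\<dots> = (a - 1) * W z powr (a - 1 - 1) * of_real B" using d2[OF that] by (rule DERIV_imp_deriv)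
    finally show ?thesis .
  qed
  have ratio: "deriv (deriv (KAB A B)) z / deriv (KAB A B) z = (of_real A - of_real B) / W z"
    if "z \<in> ball 0 1" for z
  proof -
    have e: "W z powr (a - 1 - 1) = W z powr (a - 1) / W z"
    proof -
      have "(a - 1 - 1) * ln (W z) = (a - 1) * ln (W z) - ln (W z)" by (simp add: algebra_simps)
      then have "exp ((a - 1 - 1) * ln (W z)) = exp ((a - 1) * ln (W z)) / W z"
        using Wnz[OF that] by (simp add: exp_diff)
      then show ?thesis using Wnz[OF that] unfolding powr_def by simp
    qed
    have "(a - 1) * of_real B = of_real A - of_real B" using B0 by (simp add: a_def algebra_simps)
    then show ?thesis unfolding ddK[OF that] dK[OF that] e
      using Wnz[OF that] by (simp add: field_simps)
  qed
  have z0b: "of_real z0 \<in> ball (0::complex) 1" using z1 by simp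
  have ev: "eventually (\<lambda>w. deriv (deriv (KAB A B)) w / deriv (KAB A B) w = (of_real A - of_real B) / W w) (nhds (of_real z0))"
    using eventually_nhds_in_open[OF open_ball z0b] by (rule eventually_mono) (simp add: ratio)
  have "deriv (\<lambda>w. deriv (deriv (KAB A B)) w / deriv (KAB A B) w) (of_real z0)
      = deriv (\<lambda>w. (of_real A - of_real B) / W w) (of_real z0)"
    by (rule deriv_cong_ev[OF ev refl])
  also have "\<dots> = - (of_real A - of_real B) * of_real B / (W (of_real z0))^2"
  proof (rule DERIV_imp_deriv)
    show "((\<lambda>w. (of_real A - of_real B) / W w) has_field_derivative - (of_real A - of_real B) * of_real B / (W (of_real z0))^2) (at (of_real z0))"
      unfolding W_def using Wnz[OF z0b] unfolding W_def
      by (auto intro!: derivative_eq_intros simp: field_simps power2_eq_square)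
  qed
  finally have dr: "deriv (\<lambda>w. deriv (deriv (KAB A B)) w / deriv (KAB A B) w) (of_real z0)
      = - (of_real A - of_real B) * of_real B / (W (of_real z0))^2" .
  have Wr: "W (of_real z0) = of_real (1 + B*z0)" by (simp add: W_def)
  have Wr0: "1 + B*z0 \<noteq> 0"
  proof
    assume "1 + B*z0 = 0"
    then have "W (of_real z0) = 0" unfolding Wr by simp
    with Wnz[OF z0b] show False by simp
  qed
  have alg: "\<And>X a b::complex. X \<noteq> 0 \<Longrightarrow> - (a - b) * b / X^2 - 1/2 * ((a - b) / X)^2 = - ((a^2 - b^2) / (2 * X^2))"
    by (simp add: field_simps power2_eq_square, (simp add: algebra_simps)?)
  have X0: "(of_real (1 + B*z0) :: complex) \<noteq> 0" using Wr0 by (simp only: of_real_eq_0_iff not_False_eq_True)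
  show ?thesis
    unfolding schwarzian_def dr ratio[OF z0b] Wr alg[OF X0] by simp
qed

lemma K_E1:
  fixes s B r :: real
  assumes "1 - sqrt (1 - B^2) < s" "s < 1 + sqrt (1 - B^2)" "\<bar>B\<bar> \<le> 1" "0 \<le> s"
  shows "s*r^2 - 2*\<bar>B\<bar>*r + 2 - s > 0"
proof -
  have B2: "0 \<le> 1 - B^2" using assms(3) by (simp add: abs_square_le_1)
  have "\<bar>s - 1\<bar> < sqrt (1 - B^2)" using assms(1,2) by linarith
  then have "sqrt ((s-1)^2) < sqrt (1 - B^2)" by (simp add: real_sqrt_abs)
  then have "(s-1)^2 < 1 - B^2" using real_sqrt_less_iff by blast
  then have d: "s*(2-s) - B^2 > 0" by (simp add: power2_eq_square algebra_simps)
  have s0: "s > 0"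
  proof (rule ccontr)
    assume "\<not> s > 0" then have "s = 0" using assms(4) by simp
    with d show False by simp
  qed
  have "s * (s*r^2 - 2*\<bar>B\<bar>*r + 2 - s) = (s*r - \<bar>B\<bar>)^2 + (s*(2-s) - B^2)"
    by (simp add: power2_eq_square algebra_simps)
  also have "\<dots> > 0" using d by (smt (verit) zero_le_power2)
  finally show ?thesis using s0 by (simp add: zero_less_mult_iff)
qed

lemma K_E2:
  fixes s B r :: real
  assumes "s \<le> \<bar>B\<bar>" "\<bar>B\<bar> \<le> 1" "0 \<le> r" "r < 1"
  shows "s*r^2 - 2*\<bar>B\<bar>*r + 2 - s > 0"
proof -
  have r2: "r^2 - 1 \<le> 0" using assms(3,4) by (simp add: abs_square_le_1)
  have "s*(r^2-1) \<ge> \<bar>B\<bar>*(r^2-1)" using mult_right_mono_neg[OF assms(1) r2] .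
  moreover have "\<bar>B\<bar>*(r^2-1) - 2*\<bar>B\<bar>*r + 2 = \<bar>B\<bar>*(r-1)^2 + 2*(1-\<bar>B\<bar>)"
    by (simp add: power2_eq_square algebra_simps)
  moreover have "\<bar>B\<bar>*(r-1)^2 + 2*(1-\<bar>B\<bar>) > 0"
  proof (cases "\<bar>B\<bar> = 1")
    case True
    have "(r-1)^2 > 0" using assms(4) by simp
    then show ?thesis using True by simp
  next
    case False
    then have "1 - \<bar>B\<bar> > 0" using assms(2) by simp
    moreover have "\<bar>B\<bar>*(r-1)^2 \<ge> 0" by simp
    ultimately show ?thesis by (smt (verit))
  qed
  ultimately show ?thesis by (simp add: algebra_simps)
qed

lemma K_E3:
  fixes s B r :: real
  assumes "s \<ge> 1 + sqrt (1 - B^2)" "\<bar>B\<bar> \<le> 1" "0 \<le> r"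
    and rr: "r < (\<bar>B\<bar> - sqrt (B^2 - s*(2-s)))/s \<or> r > (\<bar>B\<bar> + sqrt (B^2 - s*(2-s)))/s"
  shows "s*r^2 - 2*\<bar>B\<bar>*r + 2 - s > 0"
proof -
  have B2: "0 \<le> 1 - B^2" using assms(2) abs_square_le_1[of B] by linarith
  have sq0: "sqrt (1 - B^2) \<ge> 0" using B2 by simp
  have s0: "s > 0" using assms(1) sq0 by linarith
  have "s - 1 \<ge> sqrt (1 - B^2)" using assms(1) by simp
  then have "(s-1)^2 \<ge> (sqrt (1 - B^2))^2" using sq0 power_mono by blast
  then have "(s-1)^2 \<ge> 1 - B^2" using B2 by simp
  moreover have "(s-1)^2 = 1 - s*(2-s)" by (simp add: power2_eq_square algebra_simps)
  ultimately have d: "B^2 - s*(2-s) \<ge> 0" by linarith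
  define q where "q = sqrt (B^2 - s*(2-s))"
  have q2: "q^2 = B^2 - s*(2-s)" unfolding q_def by (rule real_sqrt_pow2[OF d])
  have q0: "q \<ge> 0" unfolding q_def by (rule real_sqrt_ge_zero[OF d])
  have "s * (r - (\<bar>B\<bar> - q)/s) * (r - (\<bar>B\<bar> + q)/s) = ((s*r - \<bar>B\<bar>)^2 - q^2)/s"
    using s0 by (simp add: field_simps power2_eq_square)
  also have "\<dots> = s*r^2 - 2*\<bar>B\<bar>*r + 2 - s"
    unfolding q2 using s0 by (simp add: field_simps power2_eq_square, (simp add: algebra_simps)?)
  finally have fac: "s * (r - (\<bar>B\<bar> - q)/s) * (r - (\<bar>B\<bar> + q)/s) = s*r^2 - 2*\<bar>B\<bar>*r + 2 - s" .
  have le: "(\<bar>B\<bar> - q)/s \<le> (\<bar>B\<bar> + q)/s" using s0 q0 by (simp add: divide_right_mono)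
  from rr have "(r - (\<bar>B\<bar> - q)/s) * (r - (\<bar>B\<bar> + q)/s) > 0"
  proof
    assume "r < (\<bar>B\<bar> - sqrt (B^2 - s*(2-s)))/s"
    then have "r - (\<bar>B\<bar> - q)/s < 0" "r - (\<bar>B\<bar> + q)/s < 0" using le by (auto simp: q_def)
    then show ?thesis by (simp add: mult_neg_neg)
  next
    assume "r > (\<bar>B\<bar> + sqrt (B^2 - s*(2-s)))/s"
    then have "r - (\<bar>B\<bar> - q)/s > 0" "r - (\<bar>B\<bar> + q)/s > 0" using le by (auto simp: q_def)
    then show ?thesis by simp
  qed
  then have "s * ((r - (\<bar>B\<bar> - q)/s) * (r - (\<bar>B\<bar> + q)/s)) > 0" using s0 by simp
  then show ?thesis using fac by (simp add: mult.assoc)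
qed

lemma bprops:
  fixes A B z0 p :: real
  assumes p: "p = 1 \<or> p = -1" and s: "\<bar>A+B\<bar> = -p*(A+B)" and t: "\<bar>-p*B\<bar> = \<bar>B\<bar>"
    and s2: "\<bar>A+B\<bar> < 2" and z: "\<bar>z0\<bar> < 1" and BA: "B < A" and B1: "\<bar>B\<bar> \<le> 1"
    and K: "\<bar>A+B\<bar>*\<bar>z0\<bar>^2 - 2*\<bar>B\<bar>*\<bar>z0\<bar> + 2 - \<bar>A+B\<bar> > 0"
  shows "2 - 2*(-p*B)*z0^2 - (-p*(A+B))*(1-z0^2) > 0"
    and "-1 < z0*(2 - 2*(-p*B) - (-p*(A+B))*(1-z0^2)) / (2 - 2*(-p*B)*z0^2 - (-p*(A+B))*(1-z0^2))"
    and "z0*(2 - 2*(-p*B) - (-p*(A+B))*(1-z0^2)) / (2 - 2*(-p*B)*z0^2 - (-p*(A+B))*(1-z0^2)) < 1"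
    and "2 - (-p*(A+B))*(1-z0^2) - 2*B^2*z0^2 > 0"
    and "2 - (-p*(A+B))*(1-z0^2) > 0"
    and "1 - z0^2 > 0"
proof -
  define S where "S = \<bar>A+B\<bar>"
  define t where "t = -p*B"
  define m where "m = z0^2"
  define M where "M = 2 - 2*t*m - S*(1-m)"
  define N where "N = 2 - 2*t - S*(1-m)"
  define R where "R = 2 - S*(1-m)"
  have S0: "S \<ge> 0" by (simp add: S_def)
  have m1: "1 - m > 0" using z by (simp add: m_def abs_square_less_1)
  have m0: "m \<ge> 0" by (simp add: m_def)
  have mr: "m = \<bar>z0\<bar>^2" by (simp add: m_def)
  have tB: "\<bar>t\<bar> = \<bar>B\<bar>" using t by (simp add: t_def)
  have KR: "R - 2*\<bar>B\<bar>*\<bar>z0\<bar> > 0" using K unfolding R_def mr S_def by (simp add: algebra_simps)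
  have tz: "\<bar>2*t*z0\<bar> = 2*\<bar>B\<bar>*\<bar>z0\<bar>" using tB by (simp add: abs_mult)
  have Rp: "R + 2*t*z0 > 0" "R - 2*t*z0 > 0" using KR tz by (smt (verit))+
  have e1: "M - z0*N = (1 - z0)*(R + 2*t*z0)"
    unfolding M_def N_def R_def m_def by (simp add: power2_eq_square algebra_simps)
  have e2: "M + z0*N = (1 + z0)*(R - 2*t*z0)"
    unfolding M_def N_def R_def m_def by (simp add: power2_eq_square algebra_simps)
  have z1: "1 - z0 > 0" "1 + z0 > 0" using z by auto
  have p1: "M - z0*N > 0" unfolding e1 using z1 Rp by simp
  have p2: "M + z0*N > 0" unfolding e2 using z1 Rp by simp
  have Mp: "M > 0" using p1 p2 by linarith
  have Mform: "2 - 2*(-p*B)*z0^2 - (-p*(A+B))*(1-z0^2) = M"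
    unfolding M_def t_def S_def m_def s by simp
  have Nform: "2 - 2*(-p*B) - (-p*(A+B))*(1-z0^2) = N"
    unfolding N_def t_def S_def m_def s by simp
  show "2 - 2*(-p*B)*z0^2 - (-p*(A+B))*(1-z0^2) > 0" using Mp Mform by simp
  show "-1 < z0*(2 - 2*(-p*B) - (-p*(A+B))*(1-z0^2)) / (2 - 2*(-p*B)*z0^2 - (-p*(A+B))*(1-z0^2))"
    unfolding Mform Nform using Mp p2 by (simp add: field_simps)
  show "z0*(2 - 2*(-p*B) - (-p*(A+B))*(1-z0^2)) / (2 - 2*(-p*B)*z0^2 - (-p*(A+B))*(1-z0^2)) < 1"
    unfolding Mform Nform using Mp p1 by (simp add: field_simps)
  have Sl: "S*(1-m) < 2*(1-m)" unfolding S_def by (rule mult_strict_right_mono[OF s2 m1])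
  have B2: "B^2 \<le> 1" using B1 abs_square_le_1[of B] by linarith
  have "B^2*m \<le> m" using B2 m0 by (simp add: mult_left_le_one_le)
  then have h1: "2*B^2*m \<le> 2*m" by simp
  have h2: "S*(1-m) < 2 - 2*m" using Sl by simp
  have "2 - S*(1-m) - 2*B^2*m > 0" using h1 h2 by linarith
  then show "2 - (-p*(A+B))*(1-z0^2) - 2*B^2*z0^2 > 0"
    unfolding s[symmetric] S_def[symmetric] m_def[symmetric] .
  show "2 - (-p*(A+B))*(1-z0^2) > 0"
    using h2 m0 unfolding s[symmetric] S_def[symmetric] m_def[symmetric] by linarith
  show "1 - z0^2 > 0" using m1 by (simp add: m_def)
qed

lemma D_nz:
  fixes b z B p :: real
  assumes b: "\<bar>b\<bar> < 1" and z: "\<bar>z\<bar> < 1" and B1: "\<bar>B\<bar> \<le> 1" and p: "p = 1 \<or> p = -1"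
  shows "1 - b*z + B*p*z*(z-b) \<noteq> 0"
proof -
  have bz: "\<bar>b*z\<bar> < 1" using b z by (simp add: abs_mult) (metis abs_ge_zero less_le_trans mult_left_le_one_le not_le less_eq_real_def)
  then have u: "1 - b*z > 0" by linarith
  have "(1-b*z)^2 - (z-b)^2 = (1-b^2)*(1-z^2)" by (simp add: power2_eq_square algebra_simps)
  moreover have "1 - b^2 > 0" "1 - z^2 > 0" using b z by (simp_all add: abs_square_less_1)
  ultimately have "(z-b)^2 < (1-b*z)^2" by (smt (verit) mult_pos_pos)
  then have zb: "\<bar>z-b\<bar> < 1 - b*z" using u by (metis abs_of_pos power2_abs abs_ge_zero power2_less_imp_less)
  have "\<bar>B\<bar>*\<bar>z\<bar> \<le> 1" using B1 z by (metis abs_ge_zero less_eq_real_def mult_le_one)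
  then have "\<bar>B\<bar>*\<bar>z\<bar>*\<bar>z-b\<bar> \<le> \<bar>z-b\<bar>" by (simp add: mult_left_le_one_le)
  then have "\<bar>B*p*z*(z-b)\<bar> \<le> \<bar>z-b\<bar>" using p by (auto simp: abs_mult)
  then show ?thesis using zb by linarith
qed

theorem mainTheorem2:
  fixes A B z0 :: real
  assumes hB: "-1 \<le> B" and hBA: "B < A" and hA: "A \<le> 1"
    and hz0: "-1 < z0" "z0 < 1"
  shows
    "(((A, B) \<in> E1 \<union> E2 \<or> ((A, B) \<in> E3 \<and> complex_of_real z0 \<in> Sset A B)) \<longrightarrow>
        par_b A B z0 \<in> {-1<..<1}
        \<and> (\<exists>f\<in>classC A B.
              (\<forall>z\<in>ball 0 1. 1 + z * deriv (deriv f) z / deriv f z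
                  = (1 + of_real A * ext_phi A B z0 z) / (1 + of_real B * ext_phi A B z0 z))
              \<and> cmod (schwarzian f (complex_of_real z0)) = Phi A B (complex_of_real z0)))
     \<and>
     (((A, B) \<in> E3 \<and> complex_of_real z0 \<notin> Sset A B \<and>
        ((B > 0 \<and> z0 \<le> 0) \<or> (B < 0 \<and> z0 \<ge> 0))) \<longrightarrow>
        cmod (schwarzian (KAB A B) (complex_of_real z0))
          = \<bar>A^2 - B^2\<bar> / (2 * (1 - \<bar>B\<bar> * \<bar>z0\<bar>)^2))"
proof (intro conjI impI)
  have B1: "\<bar>B\<bar> \<le> 1" using hB hBA hA by linarith
  have z1: "\<bar>z0\<bar> < 1" using hz0 by linarith
  have s2: "\<bar>A+B\<bar> < 2" using hB hBA hA by linarith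
  define p where "p = par_p A B"
  define b where "b = par_b A B z0"
  have p: "p = 1 \<or> p = -1" by (simp add: p_def par_p_def)
  have s: "\<bar>A+B\<bar> = -p*(A+B)" by (simp add: p_def par_p_def)
  have q: "par_q A B * \<bar>B\<bar> = -p*B"
    using hBA by (auto simp: p_def par_p_def par_q_def)
  have t: "\<bar>-p*B\<bar> = \<bar>B\<bar>" using p by auto
  {
    assume H: "(A, B) \<in> E1 \<union> E2 \<or> ((A, B) \<in> E3 \<and> complex_of_real z0 \<in> Sset A B)"
    have K: "\<bar>A+B\<bar>*\<bar>z0\<bar>^2 - 2*\<bar>B\<bar>*\<bar>z0\<bar> + 2 - \<bar>A+B\<bar> > 0"
    proof -
      consider "(A, B) \<in> E1" | "(A, B) \<in> E2" | "(A, B) \<in> E3" "complex_of_real z0 \<in> Sset A B"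
        using H by blast
      then show ?thesis
      proof cases
        case 1
        then show ?thesis using K_E1[of B "\<bar>A+B\<bar>" "\<bar>z0\<bar>"] B1 by (simp add: E1_def)
      next
        case 2
        then show ?thesis using K_E2[of "\<bar>A+B\<bar>" B "\<bar>z0\<bar>"] B1 z1 by (simp add: E2_def)
      next
        case 3
        then show ?thesis using K_E3[of B "\<bar>A+B\<bar>" "\<bar>z0\<bar>"] B1
          by (simp add: E3_def Sset_def delta1_def delta2_def)
      qed
    qed
    have bform: "b = z0*(2 - 2*(-p*B) - (-p*(A+B))*(1-z0^2)) / (2 - 2*(-p*B)*z0^2 - (-p*(A+B))*(1-z0^2))"
      unfolding b_def par_b_def mult.assoc[of 2 "par_q A B" "\<bar>B\<bar>"] q s ..
    note bp = bprops[OF p s t s2 z1 hBA B1 K]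
    have bin: "-1 < b" "b < 1" using bp(2,3) unfolding bform by auto
    then show "par_b A B z0 \<in> {-1<..<1}" by (simp add: b_def)
    have babs: "\<bar>b\<bar> < 1" using bin by linarith
    obtain f where f: "f \<in> classC A B"
      and fid: "\<forall>z\<in>ball 0 1. 1 + z * deriv (deriv f) z / deriv f z
        = (1 + of_real A * (of_real p * z * (z - of_real b) / (1 - of_real b * z)))
          / (1 + of_real B * (of_real p * z * (z - of_real b) / (1 - of_real b * z)))"
      and fS: "\<forall>z\<in>ball 0 1. schwarzian f z =
        deriv (\<lambda>z. of_real ((A-B)*p) * (z - of_real b) / (1 - of_real b * z + of_real (B*p) * z * (z - of_real b))) z
        - ((\<lambda>z. of_real ((A-B)*p) * (z - of_real b) / (1 - of_real b * z + of_real (B*p) * z * (z - of_real b))) z)^2/2"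
      using exists_f[OF babs B1 p, of A] by blast
    have ephi: "ext_phi A B z0 = (\<lambda>z. of_real p * z * (z - of_real b) / (1 - of_real b * z))"
      by (rule ext) (simp add: ext_phi_def p_def b_def)
    have z0b: "complex_of_real z0 \<in> ball 0 1" using z1 by simp
    have Dnz: "1 - b*z0 + (B*p)*z0*(z0-b) \<noteq> 0" using D_nz[OF babs z1 B1 p] by simp
    have "schwarzian f (complex_of_real z0) = of_real ((2*((A-B)*p)*((1 - b*z0 + (B*p)*z0*(z0-b)) - (z0-b)*(-b*(1+(B*p)) + 2*(B*p)*z0)) - ((A-B)*p)^2*(z0-b)^2)
           / (2*(1 - b*z0 + (B*p)*z0*(z0-b))^2))"
      using fS z0b g_real[OF Dnz, of "(A-B)*p"] by simp
    also have "\<dots> = of_real ((2*((A-B)*p)*((1 - b*z0 + B*p*z0*(z0-b)) - (z0-b)*(-b*(1+B*p) + 2*B*p*z0)) - ((A-B)*p)^2*(z0-b)^2)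
           / (2*(1 - b*z0 + B*p*z0*(z0-b))^2))"
      by (simp only: mult.assoc)
    also have "\<dots> = of_real (p * ((A-B)*(2 - (-p*(A+B))*(1-z0^2)) / ((1-z0^2)*(2 - (-p*(A+B))*(1-z0^2) - 2*B^2*z0^2))))"
      using core[OF p _ _ _ bform] bp(1,4,6) by simp
    finally have Sf: "schwarzian f (complex_of_real z0) = of_real (p * ((A-B)*(2 - (-p*(A+B))*(1-z0^2)) / ((1-z0^2)*(2 - (-p*(A+B))*(1-z0^2) - 2*B^2*z0^2))))" .
    have PhiE: "Phi A B (complex_of_real z0) = (A-B)*(2 - (-p*(A+B))*(1-z0^2)) / ((1-z0^2)*(2 - (-p*(A+B))*(1-z0^2) - 2*B^2*z0^2))"
      unfolding Phi_def s[symmetric] by simp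
    have Phipos: "(A-B)*(2 - (-p*(A+B))*(1-z0^2)) / ((1-z0^2)*(2 - (-p*(A+B))*(1-z0^2) - 2*B^2*z0^2)) > 0"
      using bp(4,5,6) hBA by (simp add: zero_less_mult_iff)
    have "cmod (schwarzian f (complex_of_real z0)) = Phi A B (complex_of_real z0)"
    proof -
      have p1: "\<bar>p\<bar> = 1" using p by auto
      show ?thesis unfolding Sf PhiE norm_of_real abs_mult p1 abs_of_pos[OF Phipos] by simp
    qed
    then show "\<exists>f\<in>classC A B.
              (\<forall>z\<in>ball 0 1. 1 + z * deriv (deriv f) z / deriv f z
                  = (1 + of_real A * ext_phi A B z0 z) / (1 + of_real B * ext_phi A B z0 z))
              \<and> cmod (schwarzian f (complex_of_real z0)) = Phi A B (complex_of_real z0)"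
      using f fid unfolding ephi by blast
  }
  {
    assume H: "(A, B) \<in> E3 \<and> complex_of_real z0 \<notin> Sset A B \<and> ((B > 0 \<and> z0 \<le> 0) \<or> (B < 0 \<and> z0 \<ge> 0))"
    have E3: "\<bar>A + B\<bar> \<ge> 1 + sqrt (1 - B^2)" "\<bar>A + B\<bar> > \<bar>B\<bar>" using H by (auto simp: E3_def)
    have B0: "B \<noteq> 0" using H by auto
    have A0: "A \<noteq> 0" using E3(2) by auto
    have sB: "1 + B*z0 = 1 - \<bar>B\<bar>*\<bar>z0\<bar>" using H by (auto simp: abs_mult[symmetric] abs_of_nonpos mult_nonneg_nonpos mult_nonpos_nonneg)
    have "cmod (schwarzian (KAB A B) (complex_of_real z0)) = \<bar>(A^2 - B^2)/(2*(1+B*z0)^2)\<bar>"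
      unfolding partb[OF A0 B0 B1 z1] norm_minus_cancel norm_of_real ..
    also have "\<dots> = \<bar>A^2 - B^2\<bar> / (2 * (1 - \<bar>B\<bar> * \<bar>z0\<bar>)^2)"
      unfolding sB by (simp add: abs_divide)
    finally show "cmod (schwarzian (KAB A B) (complex_of_real z0)) = \<bar>A^2 - B^2\<bar> / (2 * (1 - \<bar>B\<bar> * \<bar>z0\<bar>)^2)" .
  }
qed

end
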